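(* Let $0\le l<N$, let $\lambda\in\mathbf D_N$, and let $\beta=(1,c_2(\lambda)+1,\dots,c_N(\lambda)+1)$ and $\alpha=(c_2(\lambda),\dots,c_N(\lambda),0)$. Then \[ \sum_{P\in\mathbf L_{N,l}(\lambda)}q^{\mathrm{dinv}(P)}x^{\mathrm{wt}_+(P)}=\sum_{\substack{I\subseteq[N-1]\\|I|=l}}q^{h_I(\alpha)}\,N_{\beta/(\alpha+\varepsilon_I)}(X;q). \]
   Context: Dyck paths $\mathbf D_N$: south/east lattice paths from $(0,N)$ to $(N,0)$ weakly below the segment joining them; $\delta$ the staircase path. $r_i(\lambda)$ (resp. $c_i(\lambda)$) is the number of lattice squares above $\lambda$ and below $\delta$ in the $i$-th row numbered north to south (resp. $i$-th column numbered right to left). A labelling $P\in\mathbb N^N$ attaches $P_i$ to the $i$-th south step from the north, strictly increasing from north to south along each vertical run; $\mathbf L_{N,l}(\lambda)$ is the set of labellings with exactly $l$ zeros, none on a south step on the line $x=0$. $\mathrm{dinv}(P)$ counts pairs $i<j$ with $r_i=r_j$ and $P_i<P_j$, or $r_i=r_j+1$ and $P_i>P_j$; $x^{\mathrm{wt}_+(P)}=\prod_{i:P_i\ne0}x_{P_i}$. $\varepsilon_I=\sum_{i\in I}\varepsilon_i$. For a vector $\eta$ of length $n$ and $I\subseteq[n]$: $h_I(\eta)=|\{(r,s):r<s,\ r\in I,\ s\notin I,\ \eta_s=\eta_r+1\}|$. Row shapes: for $\alpha,\beta\in\mathbb Z^n$ with $\alpha_j\le\beta_j$, row $j$ of $\beta/\alpha$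 consists of boxes with $x$-coordinates $\alpha_j+1,\dots,\beta_j$; boxes at $x$-coordinates $\alpha_j$ and $\beta_j+1$ are adjacent to the left/right ends of row $j$. A $w_0$-triple is $(u,v,w)$ with $v$ a box in row $r$, $u,w$ each a box of or adjacent to a row $j>r$, with $x$-coordinates $i_u=i_v$, $i_w=i_v+1$. For a row strict tableau $S:\beta/\alpha\to\mathbb Z_+$ (strictly increasing on rows), a $w_0$-triple is increasing if $S(u)<S(v)<S(w)$, with $S(u)=-\infty$ if $u$ is left-adjacent and $S(w)=+\infty$ if $w$ is right-adjacent; $h_{w_0}(S)$ is the number of increasing triples. $N_{\beta/\alpha}(X;q)=\sum_S q^{h_{w_0}(S)}\prod_{u}x_{S(u)}$ over all such $S$, and $N_{\beta/\alpha}=0$ if some $\alpha_j>\beta_j$. *)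

theory Defs
  imports Main
begin

text \<open>Dyck paths are encoded as step lists: True = south step, False = east step.
  The path starts at (0,N); after a prefix with s south and e east steps it is at (e, N - s).
  It stays weakly below the segment x + y = N iff e \<le> s for every prefix.\<close>

definition dyck_paths :: "nat \<Rightarrow> bool list set" where
  "dyck_paths N = {p. length p = 2 * N \<and> count_list p True = N \<and>
      (\<forall>k \<le> 2 * N. count_list (take k p) False \<le> count_list (take k p) True)}"

definition staircase :: "nat \<Rightarrow> bool list" where
  "staircase N = concat (replicate N [True, False])"

text \<open>Height of the path over column x (the column between x and x+1): the y-coordinate of its
  (x+1)-th east step, i.e. N minus the number of south steps preceded by at most x east steps.\<close>
definition hgt :: "nat \<Rightarrow> bool list \<Rightarrow> nat \<Rightarrow> nat" where
  "hgt N p x = N - card {k. k < length p \<and> p ! k \<and> count_list (take k p) False \<le> x}"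

text \<open>The unit square [x,x+1] x [y,y+1] lies above the path p and below the staircase.\<close>
definition between :: "nat \<Rightarrow> bool list \<Rightarrow> nat \<Rightarrow> nat \<Rightarrow> bool" where
  "between N p x y \<longleftrightarrow> x < N \<and> y < N \<and> hgt N p x \<le> y \<and> y + 1 \<le> hgt N (staircase N) x"

text \<open>r_i: squares in the i-th row from the north (the strip N-i \<le> y \<le> N-i+1), 1 \<le> i \<le> N.\<close>
definition rowr :: "nat \<Rightarrow> bool list \<Rightarrow> nat \<Rightarrow> nat" where
  "rowr N p i = card {x. between N p x (N - i)}"

text \<open>c_j: squares in the j-th column from the right (the strip N-j \<le> x \<le> N-j+1), 1 \<le> j \<le> N.\<close>
definition colc :: "nat \<Rightarrow> bool list \<Rightarrow> nat \<Rightarrow> nat" where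
  "colc N p j = card {y. between N p (N - j) y}"

text \<open>x-coordinate of the i-th south step from the north (1-based): number of east steps before it.\<close>
definition sx :: "bool list \<Rightarrow> nat \<Rightarrow> nat" where
  "sx p i = count_list (take (filter (\<lambda>k. p ! k) [0..<length p] ! (i - 1)) p) False"

text \<open>Labellings P in N^N, stored as functions on indices 1..N (zero elsewhere),
  strictly increasing north to south along each vertical run (south steps i<j with the same
  x-coordinate), with exactly l zeros, and no zero on a south step on the line x = 0.\<close>
definition labellings :: "nat \<Rightarrow> nat \<Rightarrow> bool list \<Rightarrow> (nat \<Rightarrow> nat) set" where
  "labellings N l p = {P. (\<forall>i. (i = 0 \<or> N < i) \<longrightarrow> P i = 0) \<and>
      (\<forall>i j. 1 \<le> i \<and> i < j \<and> j \<le> N \<and> sx p i = sx p j \<longrightarrow> P i < P j) \<and>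
      card {i \<in> {1..N}. P i = 0} = l \<and>
      (\<forall>i \<in> {1..N}. sx p i = 0 \<longrightarrow> P i \<noteq> 0)}"

definition dinv :: "nat \<Rightarrow> bool list \<Rightarrow> (nat \<Rightarrow> nat) \<Rightarrow> nat" where
  "dinv N p P = card {(i, j). 1 \<le> i \<and> i < j \<and> j \<le> N \<and>
      ((rowr N p i = rowr N p j \<and> P i < P j) \<or> (rowr N p i = rowr N p j + 1 \<and> P i > P j))}"

definition wtplus :: "(nat \<Rightarrow> 'a::comm_monoid_mult) \<Rightarrow> nat \<Rightarrow> (nat \<Rightarrow> nat) \<Rightarrow> 'a" where
  "wtplus x N P = (\<Prod>i \<in> {i \<in> {1..N}. P i \<noteq> 0}. x (P i))"

definition hI :: "nat \<Rightarrow> nat set \<Rightarrow> (nat \<Rightarrow> int) \<Rightarrow> nat" where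
  "hI n I eta = card {(r, s). r < s \<and> r \<in> I \<and> r \<in> {1..n} \<and> s \<in> {1..n} \<and> s \<notin> I \<and>
      eta s = eta r + 1}"

definition boxes :: "nat \<Rightarrow> (nat \<Rightarrow> int) \<Rightarrow> (nat \<Rightarrow> int) \<Rightarrow> (nat \<times> int) set" where
  "boxes n beta gamma = {(j, t). 1 \<le> j \<and> j \<le> n \<and> gamma j < t \<and> t \<le> beta j}"

text \<open>Row strict tableaux on beta/gamma with entries in {1..m} (truncation to x_1..x_m),
  stored as functions that vanish off the boxes.\<close>
definition tableaux :: "nat \<Rightarrow> nat \<Rightarrow> (nat \<Rightarrow> int) \<Rightarrow> (nat \<Rightarrow> int) \<Rightarrow> (nat \<times> int \<Rightarrow> nat) set" where
  "tableaux m n beta gamma = {S. (\<forall>b. b \<notin> boxes n beta gamma \<longrightarrow> S b = 0) \<and>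
      (\<forall>b \<in> boxes n beta gamma. 1 \<le> S b \<and> S b \<le> m) \<and>
      (\<forall>j t t'. (j, t) \<in> boxes n beta gamma \<and> (j, t') \<in> boxes n beta gamma \<and> t < t'
          \<longrightarrow> S (j, t) < S (j, t'))}"

text \<open>Increasing w0-triples (u,v,w): v = (r,t) a box, u at (j,t), w at (j,t+1) with j > r,
  u a box of row j or left-adjacent (t = gamma_j, value -infinity),
  w a box of row j or right-adjacent (t = beta_j, value +infinity).\<close>
definition hw0 :: "nat \<Rightarrow> (nat \<Rightarrow> int) \<Rightarrow> (nat \<Rightarrow> int) \<Rightarrow> (nat \<times> int \<Rightarrow> nat) \<Rightarrow> nat" where
  "hw0 n beta gamma S = card {(r, t, j). (r, t) \<in> boxes n beta gamma \<and> r < j \<and> j \<le> n \<and>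
      gamma j \<le> t \<and> t \<le> beta j \<and>
      (t = gamma j \<or> S (j, t) < S (r, t)) \<and>
      (t = beta j \<or> S (r, t) < S (j, t + 1))}"

text \<open>N_{beta/gamma}(x_1,...,x_m; q), i.e. N_{beta/gamma}(X;q) with x_i = 0 for i > m.\<close>
definition Nshape :: "nat \<Rightarrow> nat \<Rightarrow> (nat \<Rightarrow> int) \<Rightarrow> (nat \<Rightarrow> int) \<Rightarrow> 'a::comm_ring_1 \<Rightarrow> (nat \<Rightarrow> 'a) \<Rightarrow> 'a" where
  "Nshape m n beta gamma q x =
     (if \<exists>j \<in> {1..n}. gamma j > beta j then 0
      else (\<Sum>S \<in> tableaux m n beta gamma. q ^ hw0 n beta gamma S * (\<Prod>b \<in> boxes n beta gamma. x (S b))))"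

definition beta_of :: "nat \<Rightarrow> bool list \<Rightarrow> nat \<Rightarrow> int" where
  "beta_of N p j = (if j = 1 then 1 else int (colc N p j) + 1)"

definition alpha_of :: "nat \<Rightarrow> bool list \<Rightarrow> nat \<Rightarrow> int" where
  "alpha_of N p j = (if j < N then int (colc N p (j + 1)) else 0)"

definition epsI :: "nat set \<Rightarrow> nat \<Rightarrow> int" where
  "epsI I j = (if j \<in> I then 1 else 0)"

end

theory Submission
  imports Defs
begin

lemma cl_card: "count_list (take k p) b = card {k'. k' < k \<and> k' < length p \<and> p ! k' = b}"
proof -
  have "count_list (take k p) b = card {i. i < length (take k p) \<and> b = take k p ! i}"
    by (simp add: count_list_eq_length_filter length_filter_conv_card)
  also have "{i. i < length (take k p) \<and> b = take k p ! i} = {k'. k' < k \<and> k' < length p \<and> p ! k' = b}"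
    by auto
  finally show ?thesis .
qed

definition tpos :: "bool list \<Rightarrow> nat list" where
  "tpos p = filter (\<lambda>k. p ! k) [0..<length p]"

lemma tpos_sorted: "sorted_wrt (<) (tpos p)"
  unfolding tpos_def by (rule sorted_wrt_filter) (rule sorted_wrt_upt)

lemma tpos_distinct: "distinct (tpos p)"
  unfolding tpos_def by simp

lemma tpos_set: "set (tpos p) = {k. k < length p \<and> p ! k}"
  unfolding tpos_def by auto

lemma tpos_less: "i < j \<Longrightarrow> j < length (tpos p) \<Longrightarrow> tpos p ! i < tpos p ! j"
  using sorted_wrt_nth_less[OF tpos_sorted] by blast

lemma tpos_less_iff: "i < length (tpos p) \<Longrightarrow> j < length (tpos p) \<Longrightarrow> tpos p ! i < tpos p ! j \<longleftrightarrow> i < j"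
  by (metis linorder_neqE_nat order_less_asym tpos_less)

lemma tpos_length: "length (tpos p) = count_list p True"
proof -
  have "length (tpos p) = card (set (tpos p))" using tpos_distinct distinct_card by metis
  also have "\<dots> = card {k. k < length p \<and> p ! k}" by (simp add: tpos_set)
  also have "\<dots> = count_list (take (length p) p) True" using cl_card[of "length p" p True] by simp
  finally show ?thesis by simp
qed

lemma tpos_in: "i < length (tpos p) \<Longrightarrow> tpos p ! i < length p \<and> p ! (tpos p ! i)"
  using tpos_set nth_mem by blast

lemma countT_tpos: assumes "i < length (tpos p)"
  shows "count_list (take (tpos p ! i) p) True = i"
proof -
  let ?ps = "tpos p"
  have "count_list (take (?ps ! i) p) True = card {k'. k' < ?ps ! i \<and> k' < length p \<and> p ! k'}"
    by (simp add: cl_card)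
  also have "{k'. k' < ?ps ! i \<and> k' < length p \<and> p ! k'} = (!) ?ps ` {..<i}"
  proof
    show "{k'. k' < ?ps ! i \<and> k' < length p \<and> p ! k'} \<subseteq> (!) ?ps ` {..<i}"
    proof
      fix k assume k: "k \<in> {k'. k' < ?ps ! i \<and> k' < length p \<and> p ! k'}"
      then have "k \<in> set ?ps" by (simp add: tpos_set)
      then obtain i' where i': "i' < length ?ps" "?ps ! i' = k" by (auto simp: in_set_conv_nth)
      then have "i' < i" using k tpos_less_iff[OF i'(1) assms] by auto
      then show "k \<in> (!) ?ps ` {..<i}" using i' by auto
    qed
  next
    show "(!) ?ps ` {..<i} \<subseteq> {k'. k' < ?ps ! i \<and> k' < length p \<and> p ! k'}"
      using assms tpos_less tpos_in by fastforce
  qed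
  also have "card \<dots> = i"
  proof (rule card_image[THEN trans])
    show "inj_on ((!) ?ps) {..<i}" using assms
      by (intro inj_onI) (metis lessThan_iff nat_neq_iff order.strict_trans tpos_less)
  qed simp
  finally show ?thesis .
qed

lemma countF_mono: "k \<le> k' \<Longrightarrow> count_list (take k p) b \<le> count_list (take k' p) b"
  unfolding cl_card by (rule card_mono) auto

lemma dyck_facts:
  assumes "p \<in> dyck_paths N"
  shows "length (tpos p) = N" and "length p = 2 * N"
    and "\<And>i. 1 \<le> i \<Longrightarrow> i \<le> N \<Longrightarrow> sx p i < i"
    and "\<And>i i'. 1 \<le> i \<Longrightarrow> i \<le> i' \<Longrightarrow> i' \<le> N \<Longrightarrow> sx p i \<le> sx p i'"
    and "\<And>x. hgt N p x = N - card {i \<in> {1..N}. sx p i \<le> x}"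
proof -
  have len: "length p = 2 * N" and cT: "count_list p True = N"
    and dy: "\<And>k. k \<le> 2 * N \<Longrightarrow> count_list (take k p) False \<le> count_list (take k p) True"
    using assms by (auto simp: dyck_paths_def)
  show lt: "length (tpos p) = N" using cT tpos_length by simp
  show "length p = 2 * N" by (fact len)
  show "sx p i < i" if "1 \<le> i" "i \<le> N" for i
  proof -
    have il: "i - 1 < length (tpos p)" using that lt by simp
    have "tpos p ! (i - 1) \<le> 2 * N" using tpos_in[OF il] len by simp
    then have "sx p i \<le> count_list (take (tpos p ! (i - 1)) p) True"
      unfolding sx_def tpos_def[symmetric] by (rule dy)
    then show ?thesis using countT_tpos[OF il] that by simp
  qed
  show "sx p i \<le> sx p i'" if "1 \<le> i" "i \<le> i'" "i' \<le> N" for i i'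
  proof -
    have "tpos p ! (i - 1) \<le> tpos p ! (i' - 1)"
    proof (cases "i = i'")
      case False
      then have "i - 1 < i' - 1" using that by auto
      moreover have "i' - 1 < length (tpos p)" using that lt by auto
      ultimately show ?thesis using tpos_less[of "i - 1" "i' - 1" p] by auto
    qed simp
    then show ?thesis unfolding sx_def tpos_def[symmetric] by (rule countF_mono)
  qed
  show "hgt N p x = N - card {i \<in> {1..N}. sx p i \<le> x}" for x
  proof -
    have "{k. k < length p \<and> p ! k \<and> count_list (take k p) False \<le> x}
        = (\<lambda>i. tpos p ! (i - 1)) ` {i \<in> {1..N}. sx p i \<le> x}"
    proof
      show "{k. k < length p \<and> p ! k \<and> count_list (take k p) False \<le> x}
        \<subseteq> (\<lambda>i. tpos p ! (i - 1)) ` {i \<in> {1..N}. sx p i \<le> x}"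
      proof
        fix k assume k: "k \<in> {k. k < length p \<and> p ! k \<and> count_list (take k p) False \<le> x}"
        then have "k \<in> set (tpos p)" by (simp add: tpos_set)
        then obtain i' where i': "i' < N" "tpos p ! i' = k" using lt by (auto simp: in_set_conv_nth)
        have "sx p (Suc i') \<le> x" using k i' unfolding sx_def tpos_def[symmetric] by simp
        then show "k \<in> (\<lambda>i. tpos p ! (i - 1)) ` {i \<in> {1..N}. sx p i \<le> x}"
          using i' by (intro image_eqI[of _ _ "Suc i'"]) auto
      qed
    next
      show "(\<lambda>i. tpos p ! (i - 1)) ` {i \<in> {1..N}. sx p i \<le> x}
         \<subseteq> {k. k < length p \<and> p ! k \<and> count_list (take k p) False \<le> x}"
        using tpos_in lt unfolding sx_def tpos_def[symmetric] by fastforce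
    qed
    moreover have "inj_on (\<lambda>i. tpos p ! (i - 1)) {i \<in> {1..N}. sx p i \<le> x}"
    proof (rule inj_onI)
      fix i j assume "i \<in> {i \<in> {1..N}. sx p i \<le> x}" "j \<in> {i \<in> {1..N}. sx p i \<le> x}"
        "tpos p ! (i - 1) = tpos p ! (j - 1)"
      then have "i - 1 = j - 1" using nth_eq_iff_index_eq[OF tpos_distinct, of "i - 1" p "j - 1"] lt by auto
      then show "i = j" using \<open>i \<in> _\<close> \<open>j \<in> _\<close> by auto
    qed
    ultimately show ?thesis unfolding hgt_def by (simp add: card_image)
  qed
qed

lemma stair_map: "staircase N = map even [0..<2*N]"
proof (induction N)
  case 0 then show ?case by (simp add: staircase_def)
next
  case (Suc N)
  have "staircase (Suc N) = staircase N @ [True, False]"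
    unfolding staircase_def by (simp flip: replicate_append_same)
  also have "\<dots> = map even [0..<2 * Suc N]" using Suc by simp
  finally show ?case .
qed

lemma count_even_F: "count_list (map even [0..<n]) False = n div 2"
  by (induction n) auto

lemma hgt_stair: "hgt N (staircase N) x = N - min N (Suc x)"
proof -
  have "{k. k < length (staircase N) \<and> staircase N ! k \<and> count_list (take k (staircase N)) False \<le> x}
      = {k. k < 2 * N \<and> even k \<and> k div 2 \<le> x}"
    by (auto simp: stair_map take_map count_even_F)
  also have "\<dots> = (\<lambda>i. 2 * i) ` {..<min N (Suc x)}"
    by (auto elim!: evenE)
  also have "card \<dots> = min N (Suc x)" by (simp add: card_image inj_on_def)
  finally show ?thesis unfolding hgt_def by simp
qed

lemma card_lt_sum: "card {y. y < (x::nat) \<and> Q y} = (\<Sum>y<x. if Q y then 1 else (0::nat))"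
proof (induction x)
  case 0 then show ?case by simp
next
  case (Suc x)
  show ?case
  proof (cases "Q x")
    case True
    then have "{y. y < Suc x \<and> Q y} = insert x {y. y < x \<and> Q y}" by auto
    then show ?thesis using Suc True by simp
  next
    case False
    then have "{y. y < Suc x \<and> Q y} = {y. y < x \<and> Q y}" using less_Suc_eq by auto
    then show ?thesis using Suc False by simp
  qed
qed

lemma crossing:
  fixes A :: "nat \<Rightarrow> nat"
  assumes "A 0 = 0" "\<And>y. y < x \<Longrightarrow> A y \<le> Suc (A (Suc y))" "1 \<le> T"
  shows "(\<Sum>y<x. if A y < T \<and> T \<le> A (Suc y) then 1 else 0)
       = (\<Sum>y<x. if A y = T \<and> Suc (A (Suc y)) = T then 1 else 0) + (if T \<le> A x then 1 else (0::nat))"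
  using assms(2)
proof (induction x)
  case 0 then show ?case using assms by simp
next
  case (Suc x)
  have h: "A x \<le> Suc (A (Suc x))" using Suc.prems by simp
  have IH: "(\<Sum>y<x. if A y < T \<and> T \<le> A (Suc y) then 1 else 0)
       = (\<Sum>y<x. if A y = T \<and> Suc (A (Suc y)) = T then 1 else 0) + (if T \<le> A x then 1 else (0::nat))"
    using Suc.prems by (intro Suc.IH) simp
  have key: "(if T \<le> A x then 1 else 0) + (if A x < T \<and> T \<le> A (Suc x) then 1 else 0)
     = (if A x = T \<and> Suc (A (Suc x)) = T then 1 else (0::nat)) + (if T \<le> A (Suc x) then 1 else 0)"
    using h by (simp split: if_split; arith)
  show ?case unfolding sum.lessThan_Suc IH using key by simp
qed

lemma per_y_nz:
  fixes a0 a1 t pb p1 p2 g B S1 S2 :: nat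
  assumes sz: "a0 \<le> Suc a1" and pb: "0 < pb"
    and st: "a0 < t \<Longrightarrow> t \<le> a1 \<Longrightarrow> p1 < p2"
    and z1: "a0 < t \<Longrightarrow> t \<le> Suc a1 \<Longrightarrow> (p1 = 0 \<longleftrightarrow> z \<and> t = Suc a0)"
    and z2: "a0 \<le> t \<Longrightarrow> t \<le> a1 \<Longrightarrow> (p2 = 0 \<longleftrightarrow> z \<and> t = a0)"
    and zn: "z \<Longrightarrow> a0 \<le> a1"
    and g: "g = a0 + (if z then 1 else 0)" and B: "B = Suc a1"
    and S1: "S1 = (if g < t \<and> t \<le> B then p1 else 0)"
    and S2: "S2 = (if g < Suc t \<and> Suc t \<le> B then p2 else 0)"
  shows "(if a0 < t \<and> t \<le> Suc a1 \<and> p1 < pb then 1 else 0)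
       + (if a0 \<le> t \<and> t \<le> a1 \<and> pb < p2 then 1 else 0)
       + (if a0 = t \<and> Suc a1 = t then 1 else 0)
     = (if g \<le> t \<and> t \<le> B \<and> (t = g \<or> S1 < pb) \<and> (t = B \<or> pb < S2) then 1 else 0)
       + (if a0 < t \<and> t \<le> a1 then 1 else (0::nat))"
proof -
  consider (lo) "t < a0" | (top0) "t = a0" "a0 \<le> a1" | (empty) "t = a0" "a0 = Suc a1"
    | (mid) "a0 < t" "t \<le> a1" | (last) "a0 < t" "t = Suc a1" | (hi) "Suc a1 < t" using sz by linarith
  then show ?thesis
  proof cases
    case lo then show ?thesis using g B by simp
  next
    case top0
    show ?thesis
    proof (cases z)
      case True then show ?thesis using top0 g B z2 by simp
    next
      case False then show ?thesis using top0 g B S2 z2 by simp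
    qed
  next
    case empty
    then have "\<not> z" using zn by auto
    then show ?thesis using empty g B by simp
  next
    case mid
    show ?thesis
    proof (cases "z \<and> t = Suc a0")
      case True
      then have "p1 = 0" "0 < p2" using z1 z2 mid by auto
      then show ?thesis using True mid g B S1 S2 pb by simp
    next
      case False
      then have "p1 \<noteq> 0" "p1 < p2" "g < t" using z1 st mid g by auto
      then show ?thesis using False mid g B S1 S2 pb by auto
    qed
  next
    case last
    show ?thesis
    proof (cases "z \<and> t = Suc a0")
      case True
      then have "p1 = 0" using z1 last by auto
      then show ?thesis using True last g B S1 S2 pb by simp
    next
      case False
      then have "p1 \<noteq> 0" "g < t" using z1 last g by auto
      then show ?thesis using False last g B S1 S2 pb by auto
    qed
  next
    case hi then show ?thesis using g B by simp
  qed
qed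

lemma per_y_z:
  fixes a0 a1 t p1 p2 :: nat
  assumes sz: "a0 \<le> Suc a1"
    and z2: "a0 \<le> t \<Longrightarrow> t \<le> a1 \<Longrightarrow> (p2 = 0 \<longleftrightarrow> z \<and> t = a0)"
    and zn: "z \<Longrightarrow> a0 \<le> a1"
  shows "(if a0 < t \<and> t \<le> Suc a1 \<and> p1 < 0 then 1 else 0)
       + (if a0 \<le> t \<and> t \<le> a1 \<and> 0 < p2 then 1 else 0)
       + (if a0 = t \<and> Suc a1 = t then 1 else 0)
     = (if \<not> z \<and> a0 = t then 1 else 0)
       + (if a0 < t \<and> t \<le> a1 then 1 else (0::nat))"
proof -
  consider (lo) "t < a0" | (top0) "t = a0" "a0 \<le> a1" | (empty) "t = a0" "a0 = Suc a1"
    | (mid) "a0 < t" "t \<le> a1" | (hi) "a1 < t" "a0 < t" using sz by linarith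
  then show ?thesis
  proof cases
    case lo then show ?thesis by simp
  next
    case top0 then show ?thesis using z2 by (cases z) simp_all
  next
    case empty
    then have "\<not> z" using zn by auto
    then show ?thesis using empty by simp
  next
    case mid then show ?thesis using z2 by simp
  next
    case hi then show ?thesis by simp
  qed
qed

lemma card_pairs_snd:
  assumes "finite B" "\<And>a b. Q a b \<Longrightarrow> b \<in> B" "\<And>b. b \<in> B \<Longrightarrow> finite {a. Q a b}"
  shows "card {(a, b). Q a b} = (\<Sum>b\<in>B. card {a. Q a b})"
proof -
  have e: "{(a, b). Q a b} = (\<Union>b\<in>B. (\<lambda>a. (a, b)) ` {a. Q a b})" using assms(2) by auto
  have "card (\<Union>b\<in>B. (\<lambda>a. (a, b)) ` {a. Q a b}) = (\<Sum>b\<in>B. card ((\<lambda>a. (a, b)) ` {a. Q a b}))"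
    by (rule card_UN_disjoint) (use assms in auto)
  also have "\<dots> = (\<Sum>b\<in>B. card {a. Q a b})" by (rule sum.cong) (auto simp: card_image inj_on_def)
  finally show ?thesis using e by simp
qed

lemma card_pairs_fst:
  assumes "finite B" "\<And>a b. Q a b \<Longrightarrow> a \<in> B" "\<And>a. a \<in> B \<Longrightarrow> finite {b. Q a b}"
  shows "card {(a, b). Q a b} = (\<Sum>a\<in>B. card {b. Q a b})"
proof -
  have e: "{(a, b). Q a b} = (\<Union>a\<in>B. (\<lambda>b. (a, b)) ` {b. Q a b})" using assms(2) by auto
  have "card (\<Union>a\<in>B. (\<lambda>b. (a, b)) ` {b. Q a b}) = (\<Sum>a\<in>B. card ((\<lambda>b. (a, b)) ` {b. Q a b}))"
    by (rule card_UN_disjoint) (use assms in auto)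
  also have "\<dots> = (\<Sum>a\<in>B. card {b. Q a b})" by (rule sum.cong) (auto simp: card_image inj_on_def)
  finally show ?thesis using e by simp
qed

lemma card_triples:
  assumes "finite B" "\<And>r t j. Q r t j \<Longrightarrow> (r, t) \<in> B" "\<And>u. u \<in> B \<Longrightarrow> finite {j. Q (fst u) (snd u) j}"
  shows "card {(r, t, j). Q r t j} = (\<Sum>u\<in>B. card {j. Q (fst u) (snd u) j})"
proof -
  have e: "{(r, t, j). Q r t j} = (\<Union>u\<in>B. (\<lambda>j. (fst u, snd u, j)) ` {j. Q (fst u) (snd u) j})"
    using assms(2) by force
  have "card (\<Union>u\<in>B. (\<lambda>j. (fst u, snd u, j)) ` {j. Q (fst u) (snd u) j})
      = (\<Sum>u\<in>B. card ((\<lambda>j. (fst u, snd u, j)) ` {j. Q (fst u) (snd u) j}))"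
    by (rule card_UN_disjoint) (use assms in \<open>auto simp: prod_eq_iff\<close>)
  also have "\<dots> = (\<Sum>u\<in>B. card {j. Q (fst u) (snd u) j})" by (rule sum.cong) (auto simp: card_image inj_on_def)
  finally show ?thesis using e by simp
qed

locale cf =
  fixes N :: nat and s :: "nat \<Rightarrow> nat"
  assumes s_lt: "\<And>i. 1 \<le> i \<Longrightarrow> i \<le> N \<Longrightarrow> s i < i"
    and s_mono: "\<And>i i'. 1 \<le> i \<Longrightarrow> i \<le> i' \<Longrightarrow> i' \<le> N \<Longrightarrow> s i \<le> s i'"
begin

definition Lc :: "nat \<Rightarrow> nat" where "Lc y = card {i \<in> {1..N}. s i < y}"
definition A :: "nat \<Rightarrow> nat" where "A y = Lc y - y"

lemma Lc_le: "Lc y \<le> N"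
proof -
  have "card {i \<in> {1..N}. s i < y} \<le> card {1..N}" by (rule card_mono) auto
  then show ?thesis by (simp add: Lc_def)
qed

lemma Lc_ge: "y \<le> N \<Longrightarrow> y \<le> Lc y"
proof -
  assume y: "y \<le> N"
  have "{1..y} \<subseteq> {i \<in> {1..N}. s i < y}" using y s_lt by fastforce
  then have "card {1..y} \<le> card {i \<in> {1..N}. s i < y}" by (rule card_mono[rotated]) auto
  then show ?thesis by (simp add: Lc_def)
qed

lemma Lc_mono: "y \<le> y' \<Longrightarrow> Lc y \<le> Lc y'"
  unfolding Lc_def by (rule card_mono) auto

lemma Lc_0: "Lc 0 = 0" by (simp add: Lc_def)

lemma Lc_N: "Lc N = N" using Lc_le[of N] Lc_ge[of N] by simp

lemma lt_iff: assumes "1 \<le> i" "i \<le> N" shows "s i < y \<longleftrightarrow> i \<le> Lc y"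
proof
  assume si: "s i < y"
  have "{1..i} \<subseteq> {i \<in> {1..N}. s i < y}"
  proof
    fix k assume "k \<in> {1..i}"
    then show "k \<in> {i \<in> {1..N}. s i < y}" using s_mono[of k i] si assms by auto
  qed
  then have "card {1..i} \<le> card {i \<in> {1..N}. s i < y}" by (rule card_mono[rotated]) auto
  then show "i \<le> Lc y" by (simp add: Lc_def)
next
  assume il: "i \<le> Lc y"
  show "s i < y"
  proof (rule ccontr)
    assume "\<not> s i < y"
    then have "{i \<in> {1..N}. s i < y} \<subseteq> {1..i - 1}"
    proof (intro subsetI)
      fix k assume nk: "\<not> s i < y" and k: "k \<in> {i \<in> {1..N}. s i < y}"
      have "k < i"
      proof (rule ccontr)
        assume "\<not> k < i"
        then have "s i \<le> s k" using s_mono[of i k] assms k by auto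
        then show False using nk k by auto
      qed
      then show "k \<in> {1..i - 1}" using k by auto
    qed
    then have "card {i \<in> {1..N}. s i < y} \<le> card {1..i - 1}" by (rule card_mono[rotated]) auto
    then show False using il assms by (simp add: Lc_def)
  qed
qed

lemma col_iff: assumes "1 \<le> i" "i \<le> N" shows "s i = y \<longleftrightarrow> Lc y < i \<and> i \<le> Lc (Suc y)"
  using lt_iff[OF assms, of y] lt_iff[OF assms, of "Suc y"] by auto

lemma col_mem: assumes "Lc y < i" "i \<le> Lc (Suc y)" shows "1 \<le> i" "i \<le> N" "s i = y"
proof -
  show "1 \<le> i" using assms by simp
  show "i \<le> N" using assms Lc_le[of "Suc y"] by simp
  then show "s i = y" using col_iff assms by auto
qed

lemma s_lt_N: "1 \<le> i \<Longrightarrow> i \<le> N \<Longrightarrow> s i < N"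
  using s_lt by fastforce


lemma Lc_Suc_ge: "y < N \<Longrightarrow> Suc y \<le> Lc (Suc y)" using Lc_ge[of "Suc y"] by simp

lemma A_add: "y \<le> N \<Longrightarrow> A y + y = Lc y" using Lc_ge[of y] by (simp add: A_def)

lemma A_step: "y < N \<Longrightarrow> A y \<le> Suc (A (Suc y))"
  using Lc_ge[of y] Lc_Suc_ge[of y] Lc_mono[of y "Suc y"] by (simp add: A_def)

lemma A_0: "A 0 = 0" by (simp add: A_def Lc_0)

definition al :: "nat \<Rightarrow> int" where "al j = int (A (N - j))"
definition be :: "nat \<Rightarrow> int" where "be j = int (A (Suc N - j)) + 1"
definition bx :: "nat \<Rightarrow> nat \<times> int" where "bx i = (N - s i, int i - int (s i))"

lemma bx_box: assumes "1 \<le> i" "i \<le> N" shows "bx i \<in> boxes N be al"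
proof -
  let ?y = "s i"
  have yN: "?y < N" using s_lt_N assms .
  have c: "Lc ?y < i" "i \<le> Lc (Suc ?y)" using col_iff[OF assms] by auto
  have e1: "N - (N - ?y) = ?y" "Suc N - (N - ?y) = Suc ?y" using yN by auto
  have "A ?y + ?y = Lc ?y" "A (Suc ?y) + Suc ?y = Lc (Suc ?y)" using A_add[of ?y] A_add[of "Suc ?y"] yN by auto
  then show ?thesis using c yN e1 unfolding boxes_def bx_def al_def be_def by auto
qed

lemma box_bx: assumes "(j, t) \<in> boxes N be al"
  shows "1 \<le> nat t + (N - j) \<and> nat t + (N - j) \<le> N \<and> s (nat t + (N - j)) = N - j
     \<and> bx (nat t + (N - j)) = (j, t)"
proof -
  let ?y = "N - j"
  have j: "1 \<le> j" "j \<le> N" and t: "int (A ?y) < t" "t \<le> int (A (Suc N - j)) + 1"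
    using assms unfolding boxes_def al_def be_def by auto
  have yN: "?y < N" using j by auto
  have e: "Suc N - j = Suc ?y" using j by auto
  have a: "A ?y + ?y = Lc ?y" "A (Suc ?y) + Suc ?y = Lc (Suc ?y)" using A_add[of ?y] A_add[of "Suc ?y"] yN by auto
  obtain n where n: "t = int n" using t by (metis of_nat_0_le_iff order.strict_trans1 le_less nonneg_int_cases)
  have tn: "A ?y < n" "n \<le> Suc (A (Suc ?y))" using t n e by auto
  let ?i = "nat t + ?y"
  have "?i = n + ?y" using n by simp
  then have c: "Lc ?y < ?i" "?i \<le> Lc (Suc ?y)" using tn a by linarith+
  note cm = col_mem[OF c]
  moreover have "bx ?i = (j, t)" using cm t j unfolding bx_def by auto
  ultimately show ?thesis by auto
qed

lemma bx_inj: "inj_on bx {1..N}"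
proof (rule inj_onI)
  fix i i' assume i: "i \<in> {1..N}" and i': "i' \<in> {1..N}" and e: "bx i = bx i'"
  have "s i < N" "s i' < N" using s_lt_N i i' by auto
  then have "s i = s i'" using e unfolding bx_def by auto
  then show "i = i'" using e unfolding bx_def by auto
qed

lemma boxes_al: "boxes N be al = bx ` {1..N}"
proof
  show "boxes N be al \<subseteq> bx ` {1..N}"
  proof
    fix b assume b: "b \<in> boxes N be al"
    obtain j t where jt: "b = (j, t)" by (cases b)
    show "b \<in> bx ` {1..N}" using box_bx[of j t] b jt by (intro image_eqI[of _ _ "nat t + (N - j)"]) auto
  qed
  show "bx ` {1..N} \<subseteq> boxes N be al" using bx_box by auto
qed

definition rr :: "nat \<Rightarrow> nat" where "rr i = i - 1 - s i"

definition ldinv :: "(nat \<Rightarrow> nat) \<Rightarrow> nat" where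
  "ldinv P = card {(i, j). 1 \<le> i \<and> i < j \<and> j \<le> N \<and>
      ((rr i = rr j \<and> P i < P j) \<or> (rr i = rr j + 1 \<and> P i > P j))}"

definition labs :: "nat \<Rightarrow> nat \<Rightarrow> (nat \<Rightarrow> nat) set" where
  "labs l m = {P. (\<forall>i. (i = 0 \<or> N < i) \<longrightarrow> P i = 0) \<and>
      (\<forall>i j. 1 \<le> i \<and> i < j \<and> j \<le> N \<and> s i = s j \<longrightarrow> P i < P j) \<and>
      card {i \<in> {1..N}. P i = 0} = l \<and>
      (\<forall>i \<in> {1..N}. s i = 0 \<longrightarrow> P i \<noteq> 0) \<and> (\<forall>i. P i \<le> m)}"

definition Iof :: "(nat \<Rightarrow> nat) \<Rightarrow> nat set" where
  "Iof P = (\<lambda>i. N - s i) ` {i \<in> {1..N}. P i = 0}"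

definition gam :: "nat set \<Rightarrow> nat \<Rightarrow> int" where "gam I j = al j + epsI I j"

lemma labsD:
  assumes "P \<in> labs l m"
  shows "\<And>i. (i = 0 \<or> N < i) \<Longrightarrow> P i = 0"
    and "\<And>i j. 1 \<le> i \<Longrightarrow> i < j \<Longrightarrow> j \<le> N \<Longrightarrow> s i = s j \<Longrightarrow> P i < P j"
    and "card {i \<in> {1..N}. P i = 0} = l"
    and "\<And>i. 1 \<le> i \<Longrightarrow> i \<le> N \<Longrightarrow> s i = 0 \<Longrightarrow> P i \<noteq> 0"
    and "\<And>i. P i \<le> m"
  using assms unfolding labs_def by auto

lemma zero_top:
  assumes P: "P \<in> labs l m" and i: "1 \<le> i" "i \<le> N" and z: "P i = 0"
  shows "i = Suc (Lc (s i))"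
proof (rule ccontr)
  assume ne: "i \<noteq> Suc (Lc (s i))"
  have c: "Lc (s i) < i" "i \<le> Lc (Suc (s i))" using col_iff[OF i] by auto
  then have c2: "Lc (s i) < i - 1" "i - 1 \<le> Lc (Suc (s i))" using ne by auto
  note cm = col_mem[OF c2]
  have "P (i - 1) < P i" using labsD(2)[OF P, of "i - 1" i] cm i by auto
  then show False using z by simp
qed

lemma in_Iof:
  assumes P: "P \<in> labs l m" and y: "y < N"
  shows "N - y \<in> Iof P \<longleftrightarrow> Lc y < Lc (Suc y) \<and> P (Suc (Lc y)) = 0"
proof
  assume "N - y \<in> Iof P"
  then obtain i where i: "1 \<le> i" "i \<le> N" "P i = 0" "N - y = N - s i" unfolding Iof_def by auto
  have "s i < N" using s_lt_N i by auto
  then have si: "s i = y" using i y by auto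
  have "i = Suc (Lc y)" using zero_top[OF P i(1,2,3)] si by simp
  then show "Lc y < Lc (Suc y) \<and> P (Suc (Lc y)) = 0" using col_iff[OF i(1,2)] si i by auto
next
  assume a: "Lc y < Lc (Suc y) \<and> P (Suc (Lc y)) = 0"
  then have c: "Lc y < Suc (Lc y)" "Suc (Lc y) \<le> Lc (Suc y)" by auto
  note cm = col_mem[OF c]
  then show "N - y \<in> Iof P" using a unfolding Iof_def by (intro image_eqI[of _ _ "Suc (Lc y)"]) auto
qed

lemma zero_char:
  assumes P: "P \<in> labs l m" and c: "Lc y < a" "a \<le> Lc (Suc y)"
  shows "P a = 0 \<longleftrightarrow> N - y \<in> Iof P \<and> a = Suc (Lc y)"
proof -
  note cm = col_mem[OF c]
  have y: "y < N" using s_lt_N cm by auto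
  show ?thesis
  proof
    assume z: "P a = 0"
    then have "a = Suc (Lc y)" using zero_top[OF P cm(1,2) z] cm by simp
    then show "N - y \<in> Iof P \<and> a = Suc (Lc y)" using in_Iof[OF P y] z c by auto
  next
    assume "N - y \<in> Iof P \<and> a = Suc (Lc y)"
    then show "P a = 0" using in_Iof[OF P y] by auto
  qed
qed

lemma Iof_sub: assumes P: "P \<in> labs l m" shows "Iof P \<subseteq> {1..N - 1}"
proof
  fix j assume "j \<in> Iof P"
  then obtain i where i: "1 \<le> i" "i \<le> N" "P i = 0" "j = N - s i" unfolding Iof_def by auto
  have "s i \<noteq> 0" using labsD(4)[OF P i(1,2)] i(3) by auto
  moreover have "s i < N" using s_lt_N i by auto
  ultimately show "j \<in> {1..N - 1}" using i by auto
qed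

lemma Iof_inj: assumes P: "P \<in> labs l m" shows "inj_on (\<lambda>i. N - s i) {i \<in> {1..N}. P i = 0}"
proof (rule inj_onI)
  fix i i' assume i: "i \<in> {i \<in> {1..N}. P i = 0}" and i': "i' \<in> {i \<in> {1..N}. P i = 0}"
    and e: "N - s i = N - s i'"
  have "s i < N" "s i' < N" using s_lt_N i i' by auto
  then have "s i = s i'" using e by auto
  then show "i = i'" using zero_top[OF P, of i] zero_top[OF P, of i'] i i' by auto
qed

lemma Iof_card: assumes P: "P \<in> labs l m" shows "card (Iof P) = l"
  unfolding Iof_def using card_image[OF Iof_inj[OF P]] labsD(3)[OF P] by simp

lemma boxes_gam: "(j, t) \<in> boxes N be (gam I) \<longleftrightarrow> (j, t) \<in> boxes N be al \<and> \<not> (j \<in> I \<and> t = al j + 1)"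
  unfolding boxes_def gam_def epsI_def by auto

lemma al_bx: "1 \<le> i \<Longrightarrow> i \<le> N \<Longrightarrow> al (N - s i) = int (A (s i))"
  using s_lt_N[of i] by (simp add: al_def)

lemma be_bx: "1 \<le> i \<Longrightarrow> i \<le> N \<Longrightarrow> be (N - s i) = int (A (Suc (s i))) + 1"
  using s_lt_N[of i] by (simp add: be_def Suc_diff_le)

lemma bx_gam_iff:
  assumes P: "P \<in> labs l m" and i: "1 \<le> i" "i \<le> N"
  shows "bx i \<in> boxes N be (gam (Iof P)) \<longleftrightarrow> P i \<noteq> 0"
proof -
  have c: "Lc (s i) < i" "i \<le> Lc (Suc (s i))" using col_iff[OF i] by auto
  have sN: "s i < N" using s_lt_N i by auto
  have a: "A (s i) + s i = Lc (s i)" using A_add sN by auto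
  have "(int i - int (s i) = al (N - s i) + 1) \<longleftrightarrow> i = Suc (Lc (s i))"
    using al_bx[OF i] a by auto
  then have "bx i \<in> boxes N be (gam (Iof P)) \<longleftrightarrow> \<not> (N - s i \<in> Iof P \<and> i = Suc (Lc (s i)))"
    using boxes_gam bx_box[OF i] unfolding bx_def by auto
  also have "\<dots> \<longleftrightarrow> P i \<noteq> 0" using zero_char[OF P c] by auto
  finally show ?thesis .
qed

definition toS :: "nat set \<Rightarrow> (nat \<Rightarrow> nat) \<Rightarrow> nat \<times> int \<Rightarrow> nat" where
  "toS I P = (\<lambda>(j, t). if (j, t) \<in> boxes N be (gam I) then P (nat t + (N - j)) else 0)"

definition toP :: "(nat \<times> int \<Rightarrow> nat) \<Rightarrow> nat \<Rightarrow> nat" where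
  "toP S = (\<lambda>i. if 1 \<le> i \<and> i \<le> N then S (bx i) else 0)"

lemma bx_idx: "1 \<le> i \<Longrightarrow> i \<le> N \<Longrightarrow> nat (snd (bx i)) + (N - fst (bx i)) = i"
  using s_lt[of i] s_lt_N[of i] unfolding bx_def by auto

lemma toS_bx: "1 \<le> i \<Longrightarrow> i \<le> N \<Longrightarrow> toS I P (bx i) = (if bx i \<in> boxes N be (gam I) then P i else 0)"
  using bx_idx[of i] unfolding toS_def by (cases "bx i") auto

lemma box_gam_al: "b \<in> boxes N be (gam I) \<Longrightarrow> b \<in> boxes N be al"
  using boxes_gam by (cases b) auto

lemma box_obtain:
  assumes "b \<in> boxes N be al"
  obtains i where "1 \<le> i" "i \<le> N" "b = bx i"
  using box_bx[of "fst b" "snd b"] assms by (cases b) auto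

lemma tabD:
  assumes "S \<in> tableaux m N be (gam I)"
  shows "\<And>b. b \<notin> boxes N be (gam I) \<Longrightarrow> S b = 0"
    and "\<And>b. b \<in> boxes N be (gam I) \<Longrightarrow> 1 \<le> S b \<and> S b \<le> m"
    and "\<And>j t t'. (j, t) \<in> boxes N be (gam I) \<Longrightarrow> (j, t') \<in> boxes N be (gam I) \<Longrightarrow> t < t' \<Longrightarrow> S (j, t) < S (j, t')"
  using assms unfolding tableaux_def by auto

lemma toS_tab:
  assumes P: "P \<in> labs l m"
  shows "toS (Iof P) P \<in> tableaux m N be (gam (Iof P))"
proof -
  let ?I = "Iof P"
  have 1: "\<forall>b. b \<notin> boxes N be (gam ?I) \<longrightarrow> toS ?I P b = 0" unfolding toS_def by auto
  have 2: "1 \<le> toS ?I P b \<and> toS ?I P b \<le> m" if b: "b \<in> boxes N be (gam ?I)" for b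
  proof -
    obtain i where i: "1 \<le> i" "i \<le> N" "b = bx i" using box_obtain box_gam_al[OF b] by metis
    then have "P i \<noteq> 0" using bx_gam_iff[OF P i(1,2)] b by simp
    then show ?thesis using toS_bx[OF i(1,2)] b i labsD(5)[OF P] by auto
  qed
  have 3: "toS ?I P (j, t) < toS ?I P (j, t')"
    if b: "(j, t) \<in> boxes N be (gam ?I)" "(j, t') \<in> boxes N be (gam ?I)" "t < t'" for j t t'
  proof -
    obtain i where i: "1 \<le> i" "i \<le> N" "(j, t) = bx i" using box_obtain box_gam_al[OF b(1)] by metis
    obtain i' where i': "1 \<le> i'" "i' \<le> N" "(j, t') = bx i'" using box_obtain box_gam_al[OF b(2)] by metis
    have "s i < N" "s i' < N" using s_lt_N i i' by auto
    then have ss: "s i = s i'" using i i' unfolding bx_def by auto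
    have "i < i'" using i i' b(3) ss unfolding bx_def by auto
    then have "P i < P i'" using labsD(2)[OF P i(1) _ i'(2) ss] by auto
    then show ?thesis using toS_bx[OF i(1,2)] toS_bx[OF i'(1,2)] i i' b by auto
  qed
  show ?thesis unfolding tableaux_def using 1 2 3 by auto
qed

lemma toP_toS:
  assumes P: "P \<in> labs l m" shows "toP (toS (Iof P) P) = P"
proof
  fix i show "toP (toS (Iof P) P) i = P i"
  proof (cases "1 \<le> i \<and> i \<le> N")
    case True
    then show ?thesis unfolding toP_def using toS_bx[of i] bx_gam_iff[OF P, of i] by auto
  next
    case False
    then show ?thesis unfolding toP_def using labsD(1)[OF P, of i] by auto
  qed
qed

lemma toS_toP:
  assumes S: "S \<in> tableaux m N be (gam I)" shows "toS I (toP S) = S"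
proof
  fix b show "toS I (toP S) b = S b"
  proof (cases "b \<in> boxes N be (gam I)")
    case True
    obtain i where i: "1 \<le> i" "i \<le> N" "b = bx i" using box_obtain box_gam_al[OF True] by metis
    show ?thesis using toS_bx[OF i(1,2)] True i unfolding toP_def by auto
  next
    case False
    then show ?thesis using tabD(1)[OF S False] unfolding toS_def by (cases b) auto
  qed
qed

lemma toP_zero_iff:
  assumes S: "S \<in> tableaux m N be (gam I)" and i: "1 \<le> i" "i \<le> N"
  shows "toP S i = 0 \<longleftrightarrow> (N - s i \<in> I \<and> i = Suc (Lc (s i)))"
proof -
  have sN: "s i < N" using s_lt_N i by auto
  have c: "Lc (s i) < i" using col_iff[OF i] by auto
  have a: "A (s i) + s i = Lc (s i)" using A_add sN by auto
  have e: "(int i - int (s i) = al (N - s i) + 1) \<longleftrightarrow> i = Suc (Lc (s i))"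
    using al_bx[OF i] a by auto
  have "toP S i = 0 \<longleftrightarrow> bx i \<notin> boxes N be (gam I)"
    using tabD(1,2)[OF S, of "bx i"] i unfolding toP_def by auto
  also have "\<dots> \<longleftrightarrow> (N - s i \<in> I \<and> i = Suc (Lc (s i)))"
    using boxes_gam[of "N - s i" "int i - int (s i)" I] bx_box[OF i] e unfolding bx_def by auto
  finally show ?thesis .
qed

lemma toP_labs:
  assumes S: "S \<in> tableaux m N be (gam I)" and I: "I \<subseteq> {1..N - 1}" "card I = l"
    and valid: "\<And>j. j \<in> I \<Longrightarrow> gam I j \<le> be j"
  shows "toP S \<in> labs l m" and "Iof (toP S) = I"
proof -
  let ?P = "toP S"
  have z: "?P i = 0 \<longleftrightarrow> (N - s i \<in> I \<and> i = Suc (Lc (s i)))" if "1 \<le> i" "i \<le> N" for i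
    using toP_zero_iff[OF S that] .
  have zI: "N - y \<in> I \<Longrightarrow> y < N \<Longrightarrow> Lc y < Lc (Suc y)" for y
  proof -
    assume yI: "N - y \<in> I" and y: "y < N"
    have "gam I (N - y) \<le> be (N - y)" using valid yI by auto
    then have "A y + 1 \<le> A (Suc y) + 1" using y yI unfolding gam_def epsI_def al_def be_def
      by (simp add: Suc_diff_le)
    then show ?thesis using A_add[of y] A_add[of "Suc y"] y by simp
  qed
  have inj: "inj_on (\<lambda>i. N - s i) {i \<in> {1..N}. ?P i = 0}"
  proof (rule inj_onI)
    fix i i' assume i: "i \<in> {i \<in> {1..N}. ?P i = 0}" and i': "i' \<in> {i \<in> {1..N}. ?P i = 0}"
      and e: "N - s i = N - s i'"
    have "s i < N" "s i' < N" using s_lt_N i i' by auto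
    then have "s i = s i'" using e by auto
    then show "i = i'" using z[of i] z[of i'] i i' by auto
  qed
  have img: "(\<lambda>i. N - s i) ` {i \<in> {1..N}. ?P i = 0} = I"
  proof
    show "(\<lambda>i. N - s i) ` {i \<in> {1..N}. ?P i = 0} \<subseteq> I" using z by auto
    show "I \<subseteq> (\<lambda>i. N - s i) ` {i \<in> {1..N}. ?P i = 0}"
    proof
      fix j assume j: "j \<in> I"
      let ?y = "N - j"
      have jr: "1 \<le> j" "j \<le> N - 1" using j I by auto
      then have yN: "?y < N" and jy: "N - ?y = j" by auto
      have "Lc ?y < Lc (Suc ?y)" using zI[of ?y] jy j yN by auto
      then have c: "Lc ?y < Suc (Lc ?y)" "Suc (Lc ?y) \<le> Lc (Suc ?y)" by auto
      note cm = col_mem[OF c]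
      have "?P (Suc (Lc ?y)) = 0" using z[OF cm(1,2)] cm(3) jy j by auto
      then show "j \<in> (\<lambda>i. N - s i) ` {i \<in> {1..N}. ?P i = 0}"
        using cm jy by (intro image_eqI[of _ _ "Suc (Lc ?y)"]) auto
    qed
  qed
  show "Iof ?P = I" unfolding Iof_def using img .
  have l1: "\<forall>i. (i = 0 \<or> N < i) \<longrightarrow> ?P i = 0" unfolding toP_def by auto
  have l2: "?P i < ?P i'" if ii: "1 \<le> i" "i < i'" "i' \<le> N" "s i = s i'" for i i'
  proof -
    have i1: "1 \<le> i" "i \<le> N" and i1': "1 \<le> i'" "i' \<le> N" using ii by auto
    have ci: "Lc (s i) < i" using col_iff[OF i1] by auto
    have nz': "?P i' \<noteq> 0" using z[OF i1'] ii ci by auto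
    show ?thesis
    proof (cases "?P i = 0")
      case True then show ?thesis using nz' by simp
    next
      case False
      have bi: "bx i \<in> boxes N be (gam I)" using False tabD(1)[OF S, of "bx i"] i1 unfolding toP_def by auto
      have bi': "bx i' \<in> boxes N be (gam I)" using nz' tabD(1)[OF S, of "bx i'"] i1' unfolding toP_def by auto
      have "S (N - s i, int i - int (s i)) < S (N - s i, int i' - int (s i))"
        using tabD(3)[OF S, of "N - s i" "int i - int (s i)" "int i' - int (s i)"] bi bi' ii
        unfolding bx_def by auto
      then show ?thesis using i1 i1' ii unfolding toP_def bx_def by auto
    qed
  qed
  have l3: "card {i \<in> {1..N}. ?P i = 0} = l" using card_image[OF inj] img I by simp
  have l4: "?P i \<noteq> 0" if "1 \<le> i" "i \<le> N" "s i = 0" for i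
    using z[OF that(1,2)] that I by auto
  have l5: "?P i \<le> m" for i
    using tabD(1,2)[OF S, of "bx i"] unfolding toP_def by (cases "bx i \<in> boxes N be (gam I)") auto
  show "?P \<in> labs l m" unfolding labs_def using l1 l2 l3 l4 l5 by auto
qed

lemma wt_eq:
  assumes P: "P \<in> labs l m"
  shows "(\<Prod>b \<in> boxes N be (gam (Iof P)). x (toS (Iof P) P b)) = wtplus x N P"
proof -
  let ?Z = "{i \<in> {1..N}. P i \<noteq> 0}"
  have bij: "bij_betw bx ?Z (boxes N be (gam (Iof P)))"
  proof (rule bij_betw_imageI)
    show "inj_on bx ?Z" using bx_inj by (rule inj_on_subset) auto
    show "bx ` ?Z = boxes N be (gam (Iof P))"
    proof
      show "bx ` ?Z \<subseteq> boxes N be (gam (Iof P))" using bx_gam_iff[OF P] by auto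
      show "boxes N be (gam (Iof P)) \<subseteq> bx ` ?Z"
      proof
        fix b assume b: "b \<in> boxes N be (gam (Iof P))"
        obtain i where i: "1 \<le> i" "i \<le> N" "b = bx i" using box_obtain box_gam_al[OF b] by metis
        then show "b \<in> bx ` ?Z" using bx_gam_iff[OF P i(1,2)] b by auto
      qed
    qed
  qed
  have "(\<Prod>b \<in> boxes N be (gam (Iof P)). x (toS (Iof P) P b)) = (\<Prod>i \<in> ?Z. x (toS (Iof P) P (bx i)))"
    using prod.reindex_bij_betw[OF bij, of "\<lambda>b. x (toS (Iof P) P b)"] by simp
  also have "\<dots> = (\<Prod>i \<in> ?Z. x (P i))"
    by (rule prod.cong) (use toS_bx bx_gam_iff[OF P] in auto)
  finally show ?thesis unfolding wtplus_def .
qed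

end

context cf begin

definition DA :: "(nat \<Rightarrow> nat) \<Rightarrow> nat \<Rightarrow> nat set" where
  "DA P b = {a. 1 \<le> a \<and> a < b \<and> ((rr a = rr b \<and> P a < P b) \<or> (rr a = rr b + 1 \<and> P a > P b))}"

lemma ldinv_sum: "ldinv P = (\<Sum>b\<in>{1..N}. card (DA P b))"
proof -
  have "ldinv P = (\<Sum>b\<in>{1..N}. card {a. 1 \<le> a \<and> a < b \<and> b \<le> N \<and>
      ((rr a = rr b \<and> P a < P b) \<or> (rr a = rr b + 1 \<and> P a > P b))})"
    unfolding ldinv_def
    by (rule card_pairs_snd[of "{1..N}" "\<lambda>i j. 1 \<le> i \<and> i < j \<and> j \<le> N \<and>
      ((rr i = rr j \<and> P i < P j) \<or> (rr i = rr j + 1 \<and> P i > P j))"]) auto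
  also have "\<dots> = (\<Sum>b\<in>{1..N}. card (DA P b))"
    unfolding DA_def by (rule sum.cong) auto
  finally show ?thesis .
qed

lemma DA_card:
  assumes P: "P \<in> labs l m" and b: "1 \<le> b" "b \<le> N"
  defines "t \<equiv> b - s b"
  shows "card (DA P b) = card {y. y < s b \<and> A y < t \<and> t \<le> Suc (A (Suc y)) \<and> P (t + y) < P b}
                      + card {y. y < s b \<and> A y \<le> t \<and> t \<le> A (Suc y) \<and> P b < P (Suc (t + y))}"
proof -
  let ?Y1 = "{y. y < s b \<and> A y < t \<and> t \<le> Suc (A (Suc y)) \<and> P (t + y) < P b}"
  let ?Y2 = "{y. y < s b \<and> A y \<le> t \<and> t \<le> A (Suc y) \<and> P b < P (Suc (t + y))}"
  let ?D1 = "{a. 1 \<le> a \<and> a < b \<and> rr a = rr b \<and> P a < P b}"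
  let ?D2 = "{a. 1 \<le> a \<and> a < b \<and> rr a = rr b + 1 \<and> P a > P b}"
  have sb: "s b < b" "s b < N" using s_lt s_lt_N b by auto
  have colA: "s a = y \<longleftrightarrow> A y + y < a \<and> a \<le> Suc (A (Suc y) + y)" if "1 \<le> a" "a \<le> N" "y < N" for a y
    using col_iff[OF that(1,2), of y] A_add[of y] A_add[of "Suc y"] that(3) by auto
  have colA': "1 \<le> a \<and> a \<le> N \<and> s a = y" if "A y + y < a" "a \<le> Suc (A (Suc y) + y)" "y < N" for a y
    using col_mem[of y a] A_add[of y] A_add[of "Suc y"] that by auto
  have split: "DA P b = ?D1 \<union> ?D2" unfolding DA_def by auto
  have disj: "?D1 \<inter> ?D2 = {}" by auto
  have e1: "?D1 = (\<lambda>y. t + y) ` ?Y1"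
  proof
    show "?D1 \<subseteq> (\<lambda>y. t + y) ` ?Y1"
    proof
      fix a assume a: "a \<in> ?D1"
      then have a1: "1 \<le> a" "a \<le> N" using b by auto
      have sa: "s a < a" using s_lt a1 by auto
      have le: "s a \<le> s b" using s_mono[of a b] a b by auto
      have ne: "s a \<noteq> s b" using a sa sb unfolding rr_def by auto
      have at: "a = t + s a" using a sa sb unfolding rr_def t_def by auto
      have "s a < N" using s_lt_N a1 by auto
      then have "A (s a) + s a < a \<and> a \<le> Suc (A (Suc (s a)) + s a)" using colA[OF a1, of "s a"] by auto
      then show "a \<in> (\<lambda>y. t + y) ` ?Y1" using a le ne at by (intro image_eqI[of _ _ "s a"]) auto
    qed
    show "(\<lambda>y. t + y) ` ?Y1 \<subseteq> ?D1"
    proof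
      fix a assume "a \<in> (\<lambda>y. t + y) ` ?Y1"
      then obtain y where y: "y \<in> ?Y1" and a: "a = t + y" by auto
      have yN: "y < N" using y sb by auto
      have c: "1 \<le> a \<and> a \<le> N \<and> s a = y" using colA'[of y a] y a yN by auto
      have "a < b" using a y sb unfolding t_def by auto
      moreover have "rr a = rr b" using c a sb unfolding rr_def t_def by auto
      ultimately show "a \<in> ?D1" using c y a by auto
    qed
  qed
  have e2: "?D2 = (\<lambda>y. Suc (t + y)) ` ?Y2"
  proof
    show "?D2 \<subseteq> (\<lambda>y. Suc (t + y)) ` ?Y2"
    proof
      fix a assume a: "a \<in> ?D2"
      then have a1: "1 \<le> a" "a \<le> N" using b by auto
      have sa: "s a < a" using s_lt a1 by auto
      have le: "s a \<le> s b" using s_mono[of a b] a b by auto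
      have ne: "s a \<noteq> s b" using a sa sb unfolding rr_def by auto
      have at: "a = Suc (t + s a)" using a sa sb unfolding rr_def t_def by auto
      have "s a < N" using s_lt_N a1 by auto
      then have "A (s a) + s a < a \<and> a \<le> Suc (A (Suc (s a)) + s a)" using colA[OF a1, of "s a"] by auto
      then show "a \<in> (\<lambda>y. Suc (t + y)) ` ?Y2" using a le ne at by (intro image_eqI[of _ _ "s a"]) auto
    qed
    show "(\<lambda>y. Suc (t + y)) ` ?Y2 \<subseteq> ?D2"
    proof
      fix a assume "a \<in> (\<lambda>y. Suc (t + y)) ` ?Y2"
      then obtain y where y: "y \<in> ?Y2" and a: "a = Suc (t + y)" by auto
      have yN: "y < N" using y sb by auto
      have c: "1 \<le> a \<and> a \<le> N \<and> s a = y" using colA'[of y a] y a yN by auto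
      have "a \<le> b" using a y sb unfolding t_def by auto
      moreover have "a \<noteq> b" using c y by auto
      moreover have "rr a = rr b + 1" using c a sb unfolding rr_def t_def by auto
      ultimately show "a \<in> ?D2" using c y a by auto
    qed
  qed
  have f1: "finite ?D1" "finite ?D2" by (rule finite_subset[of _ "{..<b}"], auto)+
  have "card (DA P b) = card ?D1 + card ?D2" using split card_Un_disjoint[OF f1 disj] by simp
  also have "card ?D1 = card ?Y1" unfolding e1 by (rule card_image) (auto simp: inj_on_def)
  also have "card ?D2 = card ?Y2" unfolding e2 by (rule card_image) (auto simp: inj_on_def)
  finally show ?thesis .
qed


lemma bij_NZ:
  assumes P: "P \<in> labs l m"
  shows "bij_betw bx {i \<in> {1..N}. P i \<noteq> 0} (boxes N be (gam (Iof P)))"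
proof (rule bij_betw_imageI)
  show "inj_on bx {i \<in> {1..N}. P i \<noteq> 0}" using bx_inj by (rule inj_on_subset) auto
  show "bx ` {i \<in> {1..N}. P i \<noteq> 0} = boxes N be (gam (Iof P))"
  proof
    show "bx ` {i \<in> {1..N}. P i \<noteq> 0} \<subseteq> boxes N be (gam (Iof P))" using bx_gam_iff[OF P] by auto
    show "boxes N be (gam (Iof P)) \<subseteq> bx ` {i \<in> {1..N}. P i \<noteq> 0}"
    proof
      fix b assume b: "b \<in> boxes N be (gam (Iof P))"
      obtain i where i: "1 \<le> i" "i \<le> N" "b = bx i" using box_obtain box_gam_al[OF b] by metis
      then show "b \<in> bx ` {i \<in> {1..N}. P i \<noteq> 0}" using bx_gam_iff[OF P i(1,2)] b by auto
    qed
  qed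
qed

definition HH :: "(nat \<Rightarrow> nat) \<Rightarrow> nat \<Rightarrow> nat \<Rightarrow> bool" where
  "HH P b y = (gam (Iof P) (N - y) \<le> int b - int (s b) \<and> int b - int (s b) \<le> be (N - y) \<and>
     (int b - int (s b) = gam (Iof P) (N - y) \<or> toS (Iof P) P (N - y, int b - int (s b)) < P b) \<and>
     (int b - int (s b) = be (N - y) \<or> P b < toS (Iof P) P (N - y, int b - int (s b) + 1)))"

lemma hw0_sum:
  assumes P: "P \<in> labs l m"
  shows "hw0 N be (gam (Iof P)) (toS (Iof P) P) = (\<Sum>b\<in>{i \<in> {1..N}. P i \<noteq> 0}. card {y. y < s b \<and> HH P b y})"
proof -
  let ?g = "gam (Iof P)" and ?S = "toS (Iof P) P" and ?B = "boxes N be (gam (Iof P))"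
  let ?Q = "\<lambda>r t j. (r, t) \<in> ?B \<and> r < j \<and> j \<le> N \<and> ?g j \<le> t \<and> t \<le> be j \<and>
      (t = ?g j \<or> ?S (j, t) < ?S (r, t)) \<and> (t = be j \<or> ?S (r, t) < ?S (j, t + 1))"
  have finB: "finite ?B"
  proof (rule finite_subset[of ?B "bx ` {1..N}"])
    show "?B \<subseteq> bx ` {1..N}" using box_gam_al boxes_al by blast
  qed simp
  have "hw0 N be ?g ?S = (\<Sum>u\<in>?B. card {j. ?Q (fst u) (snd u) j})"
    unfolding hw0_def
    by (rule card_triples[of ?B ?Q]) (use finB in \<open>auto intro: finite_subset[of _ "{..N}"]\<close>)
  also have "\<dots> = (\<Sum>b\<in>{i \<in> {1..N}. P i \<noteq> 0}. card {j. ?Q (fst (bx b)) (snd (bx b)) j})"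
    using sum.reindex_bij_betw[OF bij_NZ[OF P], of "\<lambda>u. card {j. ?Q (fst u) (snd u) j}"] by simp
  also have "\<dots> = (\<Sum>b\<in>{i \<in> {1..N}. P i \<noteq> 0}. card {y. y < s b \<and> HH P b y})"
  proof (rule sum.cong[OF refl])
    fix b assume b: "b \<in> {i \<in> {1..N}. P i \<noteq> 0}"
    then have b1: "1 \<le> b" "b \<le> N" "P b \<noteq> 0" by auto
    have sbN: "s b < N" using s_lt_N b1 by auto
    have inB: "bx b \<in> ?B" using bx_gam_iff[OF P b1(1,2)] b1 by auto
    have Sb: "?S (bx b) = P b" using toS_bx[OF b1(1,2)] inB by simp
    have e: "{j. ?Q (fst (bx b)) (snd (bx b)) j} = (\<lambda>y. N - y) ` {y. y < s b \<and> HH P b y}"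
    proof
      show "{j. ?Q (fst (bx b)) (snd (bx b)) j} \<subseteq> (\<lambda>y. N - y) ` {y. y < s b \<and> HH P b y}"
      proof
        fix j assume j: "j \<in> {j. ?Q (fst (bx b)) (snd (bx b)) j}"
        then have jr: "N - s b < j" "j \<le> N" unfolding bx_def by auto
        have "HH P (b) (N - j)" using j jr Sb unfolding HH_def bx_def by (simp add: prod_eq_iff)
        then show "j \<in> (\<lambda>y. N - y) ` {y. y < s b \<and> HH P b y}"
          using jr by (intro image_eqI[of _ _ "N - j"]) auto
      qed
      show "(\<lambda>y. N - y) ` {y. y < s b \<and> HH P b y} \<subseteq> {j. ?Q (fst (bx b)) (snd (bx b)) j}"
      proof
        fix j assume "j \<in> (\<lambda>y. N - y) ` {y. y < s b \<and> HH P b y}"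
        then obtain y where y: "y < s b" "HH P b y" and jy: "j = N - y" by auto
        show "j \<in> {j. ?Q (fst (bx b)) (snd (bx b)) j}"
          using y jy inB Sb sbN unfolding HH_def bx_def by auto
      qed
    qed
    have "inj_on (\<lambda>y. N - y) {y. y < s b \<and> HH P b y}" using sbN by (auto simp: inj_on_def)
    then show "card {j. ?Q (fst (bx b)) (snd (bx b)) j} = card {y. y < s b \<and> HH P b y}"
      unfolding e by (rule card_image)
  qed
  finally show ?thesis .
qed

lemma hI_sum:
  assumes P: "P \<in> labs l m"
  shows "hI N (Iof P) al = (\<Sum>b\<in>{i \<in> {1..N}. P i = 0}. card {y. y < s b \<and> N - y \<notin> Iof P \<and> A y = Suc (A (s b))})"
proof -
  let ?I = "Iof P"
  let ?Q = "\<lambda>r s'. r < s' \<and> r \<in> ?I \<and> r \<in> {1..N} \<and> s' \<in> {1..N} \<and> s' \<notin> ?I \<and> al s' = al r + 1"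
  have finI: "finite ?I" unfolding Iof_def by auto
  have "hI N ?I al = (\<Sum>r\<in>?I. card {s'. ?Q r s'})"
    unfolding hI_def by (rule card_pairs_fst[of ?I ?Q]) (use finI in auto)
  also have "\<dots> = (\<Sum>b\<in>{i \<in> {1..N}. P i = 0}. card {s'. ?Q (N - s b) s'})"
  proof -
    have "bij_betw (\<lambda>i. N - s i) {i \<in> {1..N}. P i = 0} ?I"
      unfolding bij_betw_def using Iof_inj[OF P] by (simp add: Iof_def)
    then show ?thesis using sum.reindex_bij_betw[of "\<lambda>i. N - s i" _ _ "\<lambda>r. card {s'. ?Q r s'}"] by simp
  qed
  also have "\<dots> = (\<Sum>b\<in>{i \<in> {1..N}. P i = 0}. card {y. y < s b \<and> N - y \<notin> Iof P \<and> A y = Suc (A (s b))})"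
  proof (rule sum.cong[OF refl])
    fix b assume b: "b \<in> {i \<in> {1..N}. P i = 0}"
    then have b1: "1 \<le> b" "b \<le> N" "P b = 0" by auto
    have sbN: "s b < N" using s_lt_N b1 by auto
    have rI: "N - s b \<in> ?I" using b unfolding Iof_def by auto
    have alr: "al (N - s b) = int (A (s b))" using al_bx[OF b1(1,2)] .
    have aly: "al (N - y) = int (A y)" if "y \<le> N" for y using that by (simp add: al_def)
    have e: "{s'. ?Q (N - s b) s'} = (\<lambda>y. N - y) ` {y. y < s b \<and> N - y \<notin> Iof P \<and> A y = Suc (A (s b))}"
    proof
      show "{s'. ?Q (N - s b) s'} \<subseteq> (\<lambda>y. N - y) ` {y. y < s b \<and> N - y \<notin> Iof P \<and> A y = Suc (A (s b))}"
      proof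
        fix j assume j: "j \<in> {s'. ?Q (N - s b) s'}"
        then have jr: "N - s b < j" "j \<le> N" "1 \<le> j" by auto
        have "N - (N - j) = j" using jr by auto
        then have "A (N - j) = Suc (A (s b))" using j aly[of "N - j"] alr by auto
        then show "j \<in> (\<lambda>y. N - y) ` {y. y < s b \<and> N - y \<notin> Iof P \<and> A y = Suc (A (s b))}"
          using jr j by (intro image_eqI[of _ _ "N - j"]) auto
      qed
      show "(\<lambda>y. N - y) ` {y. y < s b \<and> N - y \<notin> Iof P \<and> A y = Suc (A (s b))} \<subseteq> {s'. ?Q (N - s b) s'}"
      proof
        fix j assume "j \<in> (\<lambda>y. N - y) ` {y. y < s b \<and> N - y \<notin> Iof P \<and> A y = Suc (A (s b))}"
        then obtain y where y: "y < s b" "N - y \<notin> Iof P" "A y = Suc (A (s b))" and jy: "j = N - y" by auto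
        have "al (N - y) = al (N - s b) + 1" using aly[of y] alr y sbN by auto
        then show "j \<in> {s'. ?Q (N - s b) s'}" using y jy rI sbN b1 by auto
      qed
    qed
    have "inj_on (\<lambda>y. N - y) {y. y < s b \<and> N - y \<notin> Iof P \<and> A y = Suc (A (s b))}"
      using sbN by (auto simp: inj_on_def)
    then show "card {s'. ?Q (N - s b) s'} = card {y. y < s b \<and> N - y \<notin> Iof P \<and> A y = Suc (A (s b))}"
      unfolding e by (rule card_image)
  qed
  finally show ?thesis .
qed

lemma LcA: "y < N \<Longrightarrow> Lc y = A y + y \<and> Lc (Suc y) = Suc (A (Suc y) + y)"
  using A_add[of y] A_add[of "Suc y"] by auto

lemma toS_col:
  assumes "y < N"
  shows "toS I P (N - y, int k) = (if gam I (N - y) < int k \<and> int k \<le> be (N - y) then P (k + y) else 0)"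
  using assms unfolding toS_def boxes_def by auto

lemma gam_col: "y < N \<Longrightarrow> gam I (N - y) = int (A y) + (if N - y \<in> I then 1 else 0)"
  unfolding gam_def al_def epsI_def by auto

lemma be_col: "y < N \<Longrightarrow> be (N - y) = int (Suc (A (Suc y)))"
  unfolding be_def by (simp add: Suc_diff_le)

lemma pointwise_facts:
  assumes P: "P \<in> labs l m" and y: "y < N"
  shows "A y \<le> Suc (A (Suc y))"
    and "A y < t \<Longrightarrow> t \<le> A (Suc y) \<Longrightarrow> P (t + y) < P (Suc (t + y))"
    and "A y < t \<Longrightarrow> t \<le> Suc (A (Suc y)) \<Longrightarrow> (P (t + y) = 0 \<longleftrightarrow> N - y \<in> Iof P \<and> t = Suc (A y))"
    and "A y \<le> t \<Longrightarrow> t \<le> A (Suc y) \<Longrightarrow> (P (Suc (t + y)) = 0 \<longleftrightarrow> N - y \<in> Iof P \<and> t = A y)"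
    and "N - y \<in> Iof P \<Longrightarrow> A y \<le> A (Suc y)"
proof -
  note L = LcA[OF y]
  show "A y \<le> Suc (A (Suc y))" using A_step y by auto
  show "P (t + y) < P (Suc (t + y))" if "A y < t" "t \<le> A (Suc y)"
  proof -
    have c1: "Lc y < t + y" "t + y \<le> Lc (Suc y)" and c2: "Lc y < Suc (t + y)" "Suc (t + y) \<le> Lc (Suc y)"
      using that L by auto
    note m1 = col_mem[OF c1] and m2 = col_mem[OF c2]
    show ?thesis using labsD(2)[OF P, of "t + y" "Suc (t + y)"] m1 m2 by auto
  qed
  show "(P (t + y) = 0 \<longleftrightarrow> N - y \<in> Iof P \<and> t = Suc (A y))" if "A y < t" "t \<le> Suc (A (Suc y))"
  proof -
    have c1: "Lc y < t + y" "t + y \<le> Lc (Suc y)" using that L by auto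
    show ?thesis using zero_char[OF P c1] L by auto
  qed
  show "(P (Suc (t + y)) = 0 \<longleftrightarrow> N - y \<in> Iof P \<and> t = A y)" if "A y \<le> t" "t \<le> A (Suc y)"
  proof -
    have c2: "Lc y < Suc (t + y)" "Suc (t + y) \<le> Lc (Suc y)" using that L by auto
    show ?thesis using zero_char[OF P c2] L by auto
  qed
  show "A y \<le> A (Suc y)" if "N - y \<in> Iof P"
    using in_Iof[OF P y] that L by auto
qed

lemma nz_b:
  assumes P: "P \<in> labs l m" and b: "1 \<le> b" "b \<le> N" "P b \<noteq> 0"
  defines "t \<equiv> b - s b"
  shows "card {y. y < s b \<and> A y < t \<and> t \<le> Suc (A (Suc y)) \<and> P (t + y) < P b}
       + card {y. y < s b \<and> A y \<le> t \<and> t \<le> A (Suc y) \<and> P b < P (Suc (t + y))}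
       = card {y. y < s b \<and> HH P b y}"
proof -
  let ?x = "s b"
  have xN: "?x < N" and xb: "?x < b" using s_lt_N s_lt b by auto
  have tint: "int b - int (s b) = int t" using xb unfolding t_def by auto
  have tx: "A ?x < t" using col_iff[OF b(1,2), of ?x] LcA[OF xN] xb unfolding t_def by auto
  have pw: "(if A y < t \<and> t \<le> Suc (A (Suc y)) \<and> P (t + y) < P b then 1 else 0)
       + (if A y \<le> t \<and> t \<le> A (Suc y) \<and> P b < P (Suc (t + y)) then 1 else 0)
       + (if A y = t \<and> Suc (A (Suc y)) = t then 1 else 0)
     = (if HH P b y then 1 else 0) + (if A y < t \<and> t \<le> A (Suc y) then 1 else (0::nat))"
    if y: "y < ?x" for y
  proof -
    have yN: "y < N" using y xN by auto
    let ?z = "N - y \<in> Iof P"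
    let ?g = "A y + (if ?z then 1 else 0)" and ?B = "Suc (A (Suc y))"
    note F = pointwise_facts[OF P yN]
    have H: "HH P b y \<longleftrightarrow> (?g \<le> t \<and> t \<le> ?B \<and>
        (t = ?g \<or> (if ?g < t \<and> t \<le> ?B then P (t + y) else 0) < P b) \<and>
        (t = ?B \<or> P b < (if ?g < Suc t \<and> Suc t \<le> ?B then P (Suc (t + y)) else 0)))"
    proof -
      have g: "gam (Iof P) (N - y) = int ?g" using gam_col[OF yN] by simp
      have B: "be (N - y) = int ?B" using be_col[OF yN] .
      have t1: "int t + 1 = int (Suc t)" by simp
      show ?thesis by (simp only: HH_def tint g B t1 toS_col[OF yN] of_nat_less_iff of_nat_le_iff of_nat_eq_iff add_Suc)
    qed
    show ?thesis unfolding H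
      by (rule per_y_nz[where z = ?z, OF F(1) _ F(2) F(3) F(4) F(5)])
        (use b in auto)
  qed
  have "(\<Sum>y<?x. (if A y < t \<and> t \<le> Suc (A (Suc y)) \<and> P (t + y) < P b then 1 else 0)
       + (if A y \<le> t \<and> t \<le> A (Suc y) \<and> P b < P (Suc (t + y)) then 1 else 0)
       + (if A y = t \<and> Suc (A (Suc y)) = t then 1 else 0))
     = (\<Sum>y<?x. (if HH P b y then 1 else 0) + (if A y < t \<and> t \<le> A (Suc y) then 1 else (0::nat)))"
    by (rule sum.cong) (use pw in auto)
  then have e: "(\<Sum>y<?x. if A y < t \<and> t \<le> Suc (A (Suc y)) \<and> P (t + y) < P b then 1 else 0)
       + (\<Sum>y<?x. if A y \<le> t \<and> t \<le> A (Suc y) \<and> P b < P (Suc (t + y)) then 1 else 0)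
       + (\<Sum>y<?x. if A y = t \<and> Suc (A (Suc y)) = t then 1 else 0)
     = (\<Sum>y<?x. if HH P b y then 1 else 0) + (\<Sum>y<?x. if A y < t \<and> t \<le> A (Suc y) then 1 else (0::nat))"
    by (simp add: sum.distrib)
  have cr: "(\<Sum>y<?x. if A y < t \<and> t \<le> A (Suc y) then 1 else 0)
       = (\<Sum>y<?x. if A y = t \<and> Suc (A (Suc y)) = t then 1 else 0) + (if t \<le> A ?x then 1 else (0::nat))"
    by (rule crossing) (use A_0 A_step xN tx in auto)
  show ?thesis unfolding card_lt_sum using e cr tx by simp
qed

lemma z_b:
  assumes P: "P \<in> labs l m" and b: "1 \<le> b" "b \<le> N" "P b = 0"
  defines "t \<equiv> b - s b"
  shows "card {y. y < s b \<and> A y < t \<and> t \<le> Suc (A (Suc y)) \<and> P (t + y) < P b}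
       + card {y. y < s b \<and> A y \<le> t \<and> t \<le> A (Suc y) \<and> P b < P (Suc (t + y))}
       = card {y. y < s b \<and> N - y \<notin> Iof P \<and> A y = Suc (A (s b))}"
proof -
  let ?x = "s b"
  have xN: "?x < N" and xb: "?x < b" using s_lt_N s_lt b by auto
  have top: "b = Suc (Lc ?x)" using zero_top[OF P b] .
  have tx: "t = Suc (A ?x)" using top LcA[OF xN] unfolding t_def by auto
  have pw: "(if A y < t \<and> t \<le> Suc (A (Suc y)) \<and> P (t + y) < P b then 1 else 0)
       + (if A y \<le> t \<and> t \<le> A (Suc y) \<and> P b < P (Suc (t + y)) then 1 else 0)
       + (if A y = t \<and> Suc (A (Suc y)) = t then 1 else 0)
     = (if \<not> (N - y \<in> Iof P) \<and> A y = t then 1 else 0) + (if A y < t \<and> t \<le> A (Suc y) then 1 else (0::nat))"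
    if y: "y < ?x" for y
  proof -
    have yN: "y < N" using y xN by auto
    note F = pointwise_facts[OF P yN]
    show ?thesis unfolding b(3)
      by (rule per_y_z[where z = "N - y \<in> Iof P", OF F(1) F(4) F(5)])
  qed
  have "(\<Sum>y<?x. (if A y < t \<and> t \<le> Suc (A (Suc y)) \<and> P (t + y) < P b then 1 else 0)
       + (if A y \<le> t \<and> t \<le> A (Suc y) \<and> P b < P (Suc (t + y)) then 1 else 0)
       + (if A y = t \<and> Suc (A (Suc y)) = t then 1 else 0))
     = (\<Sum>y<?x. (if \<not> (N - y \<in> Iof P) \<and> A y = t then 1 else 0) + (if A y < t \<and> t \<le> A (Suc y) then 1 else (0::nat)))"
    by (rule sum.cong) (use pw in auto)
  then have e: "(\<Sum>y<?x. if A y < t \<and> t \<le> Suc (A (Suc y)) \<and> P (t + y) < P b then 1 else 0)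
       + (\<Sum>y<?x. if A y \<le> t \<and> t \<le> A (Suc y) \<and> P b < P (Suc (t + y)) then 1 else 0)
       + (\<Sum>y<?x. if A y = t \<and> Suc (A (Suc y)) = t then 1 else 0)
     = (\<Sum>y<?x. if \<not> (N - y \<in> Iof P) \<and> A y = t then 1 else 0) + (\<Sum>y<?x. if A y < t \<and> t \<le> A (Suc y) then 1 else (0::nat))"
    by (simp add: sum.distrib)
  have cr: "(\<Sum>y<?x. if A y < t \<and> t \<le> A (Suc y) then 1 else 0)
       = (\<Sum>y<?x. if A y = t \<and> Suc (A (Suc y)) = t then 1 else 0) + (if t \<le> A ?x then 1 else (0::nat))"
    by (rule crossing) (use A_0 A_step xN tx in auto)
  have "card {y. y < s b \<and> N - y \<notin> Iof P \<and> A y = Suc (A (s b))} = (\<Sum>y<?x. if \<not> (N - y \<in> Iof P) \<and> A y = t then 1 else 0)"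
    unfolding card_lt_sum tx by simp
  then show ?thesis unfolding card_lt_sum using e cr tx by simp
qed

lemma dinv_id:
  assumes P: "P \<in> labs l m"
  shows "ldinv P = hI N (Iof P) al + hw0 N be (gam (Iof P)) (toS (Iof P) P)"
proof -
  let ?NZ = "{i \<in> {1..N}. P i \<noteq> 0}" and ?Z = "{i \<in> {1..N}. P i = 0}"
  let ?c = "\<lambda>b. card {y. y < s b \<and> A y < b - s b \<and> b - s b \<le> Suc (A (Suc y)) \<and> P (b - s b + y) < P b}
       + card {y. y < s b \<and> A y \<le> b - s b \<and> b - s b \<le> A (Suc y) \<and> P b < P (Suc (b - s b + y))}"
  have "ldinv P = (\<Sum>b\<in>{1..N}. ?c b)"
    unfolding ldinv_sum by (rule sum.cong) (use DA_card[OF P] in auto)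
  also have "{1..N} = ?NZ \<union> ?Z" by auto
  also have "(\<Sum>b\<in>?NZ \<union> ?Z. ?c b) = (\<Sum>b\<in>?NZ. ?c b) + (\<Sum>b\<in>?Z. ?c b)"
    by (rule sum.union_disjoint) auto
  also have "(\<Sum>b\<in>?NZ. ?c b) = hw0 N be (gam (Iof P)) (toS (Iof P) P)"
    unfolding hw0_sum[OF P] by (rule sum.cong) (use nz_b[OF P] in auto)
  also have "(\<Sum>b\<in>?Z. ?c b) = hI N (Iof P) al"
    unfolding hI_sum[OF P] by (rule sum.cong) (use z_b[OF P] in auto)
  finally show ?thesis by simp
qed

lemma valid_of_labs:
  assumes P: "P \<in> labs l m" and j: "1 \<le> j" "j \<le> N"
  shows "gam (Iof P) j \<le> be j"
proof -
  let ?y = "N - j"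
  have yN: "?y < N" and jy: "N - ?y = j" using j by auto
  have g: "gam (Iof P) j = int (A ?y) + (if j \<in> Iof P then 1 else 0)" using gam_col[OF yN] jy by simp
  have b: "be j = int (Suc (A (Suc ?y)))" using be_col[OF yN] jy by simp
  show ?thesis using g b A_step[OF yN] pointwise_facts(5)[OF P yN] jy by auto
qed

lemma finite_labs: "finite (labs l m)"
proof (rule finite_subset)
  show "labs l m \<subseteq> (\<lambda>xs i. if i \<le> N then xs ! i else 0) ` {xs. set xs \<subseteq> {0..m} \<and> length xs = Suc N}"
  proof
    fix P assume P: "P \<in> labs l m"
    have "P i = (if i \<le> N then map P [0..<Suc N] ! i else 0)" for i
    proof (cases "i \<le> N")
      case True
      then have "i < length [0..<Suc N]" by simp
      then have "map P [0..<Suc N] ! i = P ([0..<Suc N] ! i)" by (rule nth_map)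
      also have "[0..<Suc N] ! i = i" using True by (simp del: upt_Suc)
      finally show ?thesis using True by simp
    next
      case False
      then show ?thesis using labsD(1)[OF P, of i] by simp
    qed
    then have "P = (\<lambda>i. if i \<le> N then map P [0..<Suc N] ! i else 0)" by (rule ext)
    moreover have "map P [0..<Suc N] \<in> {xs. set xs \<subseteq> {0..m} \<and> length xs = Suc N}"
      using labsD(5)[OF P] by (auto simp del: upt_Suc)
    ultimately show "P \<in> (\<lambda>xs i. if i \<le> N then xs ! i else 0) ` {xs. set xs \<subseteq> {0..m} \<and> length xs = Suc N}"
      by blast
  qed
  show "finite ((\<lambda>xs i. if i \<le> N then xs ! i else 0) ` {xs. set xs \<subseteq> {0..m} \<and> length xs = Suc N})"
    by (rule finite_imageI) (rule finite_lists_length_eq, simp)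
qed

theorem main_loc:
  fixes q :: "'a::comm_ring_1" and x :: "nat \<Rightarrow> 'a"
  shows "(\<Sum>P\<in>labs l m. q ^ ldinv P * wtplus x N P)
       = (\<Sum>I\<in>{I. I \<subseteq> {1..N - 1} \<and> card I = l}. q ^ hI N I al * Nshape m N be (gam I) q x)"
proof -
  let ?II = "{I. I \<subseteq> {1..N - 1} \<and> card I = l}"
  let ?g = "\<lambda>P. q ^ ldinv P * wtplus x N P"
  have finII: "finite ?II" by (rule finite_subset[of _ "Pow {1..N - 1}"]) auto
  have img: "Iof ` labs l m \<subseteq> ?II" using Iof_sub Iof_card by auto
  have "(\<Sum>P\<in>labs l m. ?g P) = (\<Sum>I\<in>?II. \<Sum>P\<in>{P \<in> labs l m. Iof P = I}. ?g P)"
    using sum.group[OF finite_labs finII img, of ?g] by simp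
  also have "\<dots> = (\<Sum>I\<in>?II. q ^ hI N I al * Nshape m N be (gam I) q x)"
  proof (rule sum.cong[OF refl])
    fix I assume I: "I \<in> ?II"
    show "(\<Sum>P\<in>{P \<in> labs l m. Iof P = I}. ?g P) = q ^ hI N I al * Nshape m N be (gam I) q x"
    proof (cases "\<exists>j\<in>{1..N}. gam I j > be j")
      case True
      have "{P \<in> labs l m. Iof P = I} = {}"
        using True valid_of_labs by fastforce
      then have "(\<Sum>P\<in>{P \<in> labs l m. Iof P = I}. ?g P) = 0" by (simp only: sum.empty)
      moreover have "Nshape m N be (gam I) q x = 0" using True unfolding Nshape_def by simp
      ultimately show ?thesis by simp
    next
      case False
      have valid: "gam I j \<le> be j" if "j \<in> I" for j
      proof -
        have "j \<in> {1..N - 1}" using I that by auto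
        then have "j \<in> {1..N}" by auto
        then show ?thesis using False by (meson not_less)
      qed
      have "q ^ hI N I al * Nshape m N be (gam I) q x
          = (\<Sum>S\<in>tableaux m N be (gam I). q ^ hI N I al * (q ^ hw0 N be (gam I) S * (\<Prod>b\<in>boxes N be (gam I). x (S b))))"
        using False unfolding Nshape_def by (simp add: sum_distrib_left)
      moreover have "(\<Sum>P\<in>{P \<in> labs l m. Iof P = I}. ?g P) = (\<Sum>S\<in>tableaux m N be (gam I). q ^ hI N I al * (q ^ hw0 N be (gam I) S * (\<Prod>b\<in>boxes N be (gam I). x (S b))))"
      proof (rule sum.reindex_bij_witness[of _ toP "toS I"])
        fix P assume "P \<in> {P \<in> labs l m. Iof P = I}"
        then have P: "P \<in> labs l m" and PI: "Iof P = I" by auto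
        show "toP (toS I P) = P" using toP_toS[OF P] PI by simp
        show "toS I P \<in> tableaux m N be (gam I)" using toS_tab[OF P] PI by simp
        show "q ^ hI N I al * (q ^ hw0 N be (gam I) (toS I P) * (\<Prod>b\<in>boxes N be (gam I). x (toS I P b))) = ?g P"
        proof -
          have w: "(\<Prod>b\<in>boxes N be (gam I). x (toS I P b)) = wtplus x N P"
            using wt_eq[OF P, of x] PI by simp
          have d: "ldinv P = hI N I al + hw0 N be (gam I) (toS I P)" using dinv_id[OF P] PI by simp
          show ?thesis unfolding w d power_add by (simp add: mult.assoc)
        qed
      next
        fix S assume S: "S \<in> tableaux m N be (gam I)"
        show "toS I (toP S) = S" using toS_toP[OF S] .
        show "toP S \<in> {P \<in> labs l m. Iof P = I}" using toP_labs[OF S _ _ valid] I by auto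
      qed
      ultimately show ?thesis by simp
    qed
  qed
  finally show ?thesis .
qed
end

lemma hI_cong: "(\<And>j. j \<in> {1..n} \<Longrightarrow> e j = e' j) \<Longrightarrow> hI n I e = hI n I e'"
  unfolding hI_def by (rule arg_cong[where f = card]) auto

lemma boxes_cong: "(\<And>j. j \<in> {1..n} \<Longrightarrow> b j = b' j \<and> g j = g' j) \<Longrightarrow> boxes n b g = boxes n b' g'"
  unfolding boxes_def by auto

lemma Nshape_cong:
  assumes "\<And>j. j \<in> {1..n} \<Longrightarrow> b j = b' j \<and> g j = g' j"
  shows "Nshape m n b g q x = Nshape m n b' g' q x"
proof -
  have B: "boxes n b g = boxes n b' g'" using boxes_cong assms by blast
  have T: "tableaux m n b g = tableaux m n b' g'" unfolding tableaux_def B ..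
  have H: "hw0 n b g S = hw0 n b' g' S" for S
    unfolding hw0_def B by (rule arg_cong[where f = card]) (use assms in \<open>auto simp: boxes_def\<close>)
  have C: "(\<exists>j\<in>{1..n}. g j > b j) = (\<exists>j\<in>{1..n}. g' j > b' j)" using assms by auto
  show ?thesis unfolding Nshape_def B T H C ..
qed

context cf begin

lemma path_links:
  assumes lam: "\<And>x. hgt N lam x = N - Lc (Suc x)"
    and st: "\<And>x. hgt N (staircase N) x = N - min N (Suc x)"
  shows "\<And>i. 1 \<le> i \<Longrightarrow> i \<le> N \<Longrightarrow> rowr N lam i = rr i"
    and "\<And>j. 1 \<le> j \<Longrightarrow> j \<le> N \<Longrightarrow> colc N lam j = A (Suc N - j)"
proof -
  fix i assume i: "1 \<le> i" "i \<le> N"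
  have "{x. between N lam x (N - i)} = {s i..<i - 1}"
  proof (rule set_eqI)
    fix x
    have h1: "hgt N lam x \<le> N - i \<longleftrightarrow> s i \<le> x"
      using lam[of x] Lc_le[of "Suc x"] lt_iff[OF i, of "Suc x"] i by auto
    have h2: "x < N \<and> N - i + 1 \<le> hgt N (staircase N) x \<longleftrightarrow> x < i - 1"
      using st[of x] i by auto
    show "x \<in> {x. between N lam x (N - i)} \<longleftrightarrow> x \<in> {s i..<i - 1}"
      unfolding between_def using h1 h2 i by auto
  qed
  then show "rowr N lam i = rr i" unfolding rowr_def rr_def by simp
next
  fix j assume j: "1 \<le> j" "j \<le> N"
  let ?z = "Suc N - j"
  have z: "?z \<le> N" "Suc (N - j) = ?z" using j by auto
  have Lz: "?z \<le> Lc ?z" "Lc ?z \<le> N" using Lc_ge[OF z(1)] Lc_le by auto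
  have "{y. between N lam (N - j) y} = {N - Lc ?z..<j - 1}"
  proof (rule set_eqI)
    fix y
    show "y \<in> {y. between N lam (N - j) y} \<longleftrightarrow> y \<in> {N - Lc ?z..<j - 1}"
    proof -
      have jN: "j - 1 < N" using j by auto
      show ?thesis unfolding between_def using lam[of "N - j"] st[of "N - j"] z j Lz jN
        by (auto intro: less_trans)
    qed
  qed
  then have "colc N lam j = j - 1 - (N - Lc ?z)" unfolding colc_def by simp
  also have "\<dots> = A ?z" unfolding A_def using Lz j by auto
  finally show "colc N lam j = A (Suc N - j)" .
qed

end

theorem lemma5p3p2:
  fixes N l m :: nat and lam :: "bool list" and q :: "'a::comm_ring_1" and x :: "nat \<Rightarrow> 'a"
  assumes "l < N" and "lam \<in> dyck_paths N"
  shows "(\<Sum>P \<in> {P \<in> labellings N l lam. \<forall>i. P i \<le> m}. q ^ dinv N lam P * wtplus x N P) =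
         (\<Sum>I \<in> {I. I \<subseteq> {1..N - 1} \<and> card I = l}.
            q ^ hI N I (alpha_of N lam) *
            Nshape m N (beta_of N lam) (\<lambda>j. alpha_of N lam j + epsI I j) q x)"
proof -
  note D = dyck_facts[OF assms(2)]
  interpret cf N "sx lam"
    by unfold_locales (use D(3,4) in auto)
  have hl: "hgt N lam y = N - Lc (Suc y)" for y
  proof -
    have "{i \<in> {1..N}. sx lam i \<le> y} = {i \<in> {1..N}. sx lam i < Suc y}" by auto
    then show ?thesis using D(5)[of y] unfolding Lc_def by simp
  qed
  note PL = path_links[OF hl hgt_stair]
  have L: "{P \<in> labellings N l lam. \<forall>i. P i \<le> m} = labs l m"
    unfolding labellings_def labs_def by auto
  have Dv: "dinv N lam P = ldinv P" for P
  proof -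
    have "{(i, j). 1 \<le> i \<and> i < j \<and> j \<le> N \<and>
      ((rowr N lam i = rowr N lam j \<and> P i < P j) \<or> (rowr N lam i = rowr N lam j + 1 \<and> P i > P j))}
      = {(i, j). 1 \<le> i \<and> i < j \<and> j \<le> N \<and>
      ((rr i = rr j \<and> P i < P j) \<or> (rr i = rr j + 1 \<and> P i > P j))}"
    proof (rule set_eqI)
      fix ij :: "nat \<times> nat"
      obtain i j where ij: "ij = (i, j)" by (cases ij)
      show "ij \<in> {(i, j). 1 \<le> i \<and> i < j \<and> j \<le> N \<and>
      ((rowr N lam i = rowr N lam j \<and> P i < P j) \<or> (rowr N lam i = rowr N lam j + 1 \<and> P i > P j))}
      \<longleftrightarrow> ij \<in> {(i, j). 1 \<le> i \<and> i < j \<and> j \<le> N \<and>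
      ((rr i = rr j \<and> P i < P j) \<or> (rr i = rr j + 1 \<and> P i > P j))}"
      proof (cases "1 \<le> i \<and> i < j \<and> j \<le> N")
        case True
        then have "rowr N lam i = rr i" "rowr N lam j = rr j" using PL(1) by auto
        then show ?thesis using ij by simp
      next
        case False
        then show ?thesis using ij by auto
      qed
    qed
    then show ?thesis unfolding dinv_def ldinv_def by simp
  qed
  have al_eq: "alpha_of N lam j = al j" if "j \<in> {1..N}" for j
  proof (cases "j < N")
    case True
    then have "colc N lam (j + 1) = A (Suc N - (j + 1))" using PL(2)[of "j + 1"] by auto
    then show ?thesis using True unfolding alpha_of_def al_def by simp
  next
    case False
    then have "j = N" using that by auto
    then show ?thesis unfolding alpha_of_def al_def using A_0 by simp
  qed
  have be_eq: "beta_of N lam j = be j" if "j \<in> {1..N}" for j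
  proof (cases "j = 1")
    case True
    have "A N = 0" unfolding A_def using Lc_N by simp
    then show ?thesis using True unfolding beta_of_def be_def by simp
  next
    case False
    then show ?thesis using PL(2)[of j] that unfolding beta_of_def be_def by auto
  qed
  have R: "q ^ hI N I (alpha_of N lam) * Nshape m N (beta_of N lam) (\<lambda>j. alpha_of N lam j + epsI I j) q x
      = q ^ hI N I al * Nshape m N be (gam I) q x" for I
  proof -
    have "hI N I (alpha_of N lam) = hI N I al" by (rule hI_cong) (use al_eq in auto)
    moreover have "Nshape m N (beta_of N lam) (\<lambda>j. alpha_of N lam j + epsI I j) q x = Nshape m N be (gam I) q x"
      by (rule Nshape_cong) (use al_eq be_eq in \<open>auto simp: gam_def\<close>)
    ultimately show ?thesis by simp
  qed
  show ?thesis unfolding L Dv R by (rule main_loc)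
qed

end
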